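(* Let $C$ be a directed cycle on a finite vertex set, and for vertices $a,b$ let $c(a,b)$ be the number of edges of the directed path along $C$ from $a$ to $b$ ($c(a,a)=0$). Let $a_1,\dots,a_Q$ (sources) and $b_1,\dots,b_Q$ (sinks) be vertices of $C$ (repetitions allowed). The cost of a bijection $\sigma:[Q]\to[Q]$ (pairing $a_i$ with $b_{\sigma(i)}$) is $\sum_{i=1}^Q c(a_i,b_{\sigma(i)})$. Consider the algorithm GREEDY which, while unpaired elements remain, picks an arbitrary unpaired source $a_i$ and pairs it with an unpaired sink $b_j$ minimizing $c(a_i,b_j)$, or picks an arbitrary unpaired sink $b_j$ and pairs it with an unpaired source $a_i$ minimizing $c(a_i,b_j)$. Then every pairing produced by GREEDY has minimum cost among all bijections. *)

theory Defs
  imports Main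
begin

text \<open>Directed cycle on the vertex set {0..<n} (n \<ge> 1), edges v \<rightarrow> (v+1) mod n.
  cdist n a b = number of edges of the directed path along the cycle from a to b.\<close>
definition cdist :: "nat \<Rightarrow> nat \<Rightarrow> nat \<Rightarrow> nat" where
  "cdist n a b = (b + n - a) mod n"

definition pairing_cost :: "nat \<Rightarrow> nat \<Rightarrow> (nat \<Rightarrow> nat) \<Rightarrow> (nat \<Rightarrow> nat) \<Rightarrow> (nat \<Rightarrow> nat) \<Rightarrow> nat" where
  "pairing_cost n Q a b \<sigma> = (\<Sum>i\<in>{1..Q}. cdist n (a i) (b (\<sigma> i)))"

text \<open>greedy_run n a b I J P: starting with unpaired sources (indices) I and unpaired
  sinks (indices) J, some execution of GREEDY produces the set of pairs P.\<close>
inductive greedy_run :: "nat \<Rightarrow> (nat \<Rightarrow> nat) \<Rightarrow> (nat \<Rightarrow> nat) \<Rightarrow> nat set \<Rightarrow> nat set \<Rightarrow> (nat \<times> nat) set \<Rightarrow> bool"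
  for n a b where
  finished: "greedy_run n a b {} {} {}"
| pick_source: "\<lbrakk> i \<in> I; j \<in> J; \<forall>j'\<in>J. cdist n (a i) (b j) \<le> cdist n (a i) (b j');
     greedy_run n a b (I - {i}) (J - {j}) P \<rbrakk> \<Longrightarrow> greedy_run n a b I J (insert (i, j) P)"
| pick_sink: "\<lbrakk> i \<in> I; j \<in> J; \<forall>i'\<in>I. cdist n (a i) (b j) \<le> cdist n (a i') (b j);
     greedy_run n a b (I - {i}) (J - {j}) P \<rbrakk> \<Longrightarrow> greedy_run n a b I J (insert (i, j) P)"

end

theory Submission
  imports Defs "HOL-Combinatorics.Transposition"
begin

lemma cd_eq: "x < n \<Longrightarrow> y < n \<Longrightarrow> cdist n x y = (if x \<le> y then y - x else y + n - x)"
proof -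
  assume h: "x < n" "y < n"
  show ?thesis
  proof (cases "x \<le> y")
    case True
    have e: "y + n - x = (y - x) + n" using True by simp
    show ?thesis using True h by (simp only: cdist_def e mod_add_self2) simp
  next
    case False
    then show ?thesis using h by (simp add: cdist_def)
  qed
qed

lemma exch:
  assumes "x < n" "y < n" "z < n" "w < n"
    and "cdist n x y \<le> cdist n x z \<or> cdist n x y \<le> cdist n w y"
  shows "cdist n x y + cdist n w z \<le> cdist n x z + cdist n w y"
  using assms by (simp add: cd_eq split: if_splits; arith)

definition cst :: "nat \<Rightarrow> (nat \<Rightarrow> nat) \<Rightarrow> (nat \<Rightarrow> nat) \<Rightarrow> (nat \<Rightarrow> nat) \<Rightarrow> nat set \<Rightarrow> nat" where
  "cst n a b s I = (\<Sum>k\<in>I. cdist n (a k) (b (s k)))"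

lemma swap_ex:
  assumes fin: "finite I" and iI: "i \<in> I" and jJ: "j \<in> J" and bt: "bij_betw \<tau> I J"
    and H: "\<forall>k\<in>I. cdist n (a i) (b j) + cdist n (a k) (b (\<tau> i)) \<le> cdist n (a i) (b (\<tau> i)) + cdist n (a k) (b j)"
  shows "\<exists>\<tau>'. bij_betw \<tau>' I J \<and> \<tau>' i = j \<and> cst n a b \<tau>' I \<le> cst n a b \<tau> I"
proof (cases "\<tau> i = j")
  case True
  then show ?thesis using bt by blast
next
  case False
  obtain i' where i': "i' \<in> I" "\<tau> i' = j" using bt jJ unfolding bij_betw_def by blast
  have ne: "i' \<noteq> i" using False i' by auto
  define \<tau>' where "\<tau>' = Fun.swap i i' \<tau>"
  have b': "bij_betw \<tau>' I J" unfolding \<tau>'_def using bij_betw_swap_iff[OF iI i'(1)] bt by blast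
  have t1: "\<tau>' i = j" "\<tau>' i' = \<tau> i" using i' ne by (auto simp: \<tau>'_def transpose_def)
  have t2: "\<And>k. k \<noteq> i \<Longrightarrow> k \<noteq> i' \<Longrightarrow> \<tau>' k = \<tau> k" by (auto simp: \<tau>'_def transpose_def)
  let ?f = "\<lambda>s k. cdist n (a k) (b (s k))"
  have i'R: "i' \<in> I - {i}" using i' ne by auto
  have dec: "\<And>s. cst n a b s I = ?f s i + ?f s i' + sum (?f s) (I - {i} - {i'})"
    unfolding cst_def using fin iI i'R
    by (simp add: sum.remove[OF fin iI] sum.remove[of "I - {i}" i'] add.assoc)
  have eqr: "sum (?f \<tau>') (I - {i} - {i'}) = sum (?f \<tau>) (I - {i} - {i'})"
    by (rule sum.cong) (auto simp: t2)
  have "?f \<tau>' i + ?f \<tau>' i' \<le> ?f \<tau> i + ?f \<tau> i'"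
    using H i' t1 by auto
  then have "cst n a b \<tau>' I \<le> cst n a b \<tau> I" using dec[of \<tau>'] dec[of \<tau>] eqr by linarith
  then show ?thesis using b' t1 by blast
qed

lemma step:
  assumes fin: "finite I" and iI: "i \<in> I" and jJ: "j \<in> J"
    and bs: "bij_betw \<sigma>' (I - {i}) (J - {j})"
    and opt: "\<forall>\<tau>. bij_betw \<tau> (I - {i}) (J - {j}) \<longrightarrow> cst n a b \<sigma>' (I - {i}) \<le> cst n a b \<tau> (I - {i})"
    and H: "\<And>\<tau>. bij_betw \<tau> I J \<Longrightarrow> \<forall>k\<in>I. cdist n (a i) (b j) + cdist n (a k) (b (\<tau> i)) \<le> cdist n (a i) (b (\<tau> i)) + cdist n (a k) (b j)"
    and P: "P = {(k, \<sigma>' k) | k. k \<in> I - {i}}"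
  shows "\<exists>\<sigma>. bij_betw \<sigma> I J \<and> insert (i, j) P = {(k, \<sigma> k) | k. k \<in> I} \<and>
           (\<forall>\<tau>. bij_betw \<tau> I J \<longrightarrow> cst n a b \<sigma> I \<le> cst n a b \<tau> I)"
proof -
  define \<sigma> where "\<sigma> = \<sigma>'(i := j)"
  have bs2: "bij_betw \<sigma> (I - {i}) (J - {j})"
    using bs unfolding \<sigma>_def by (rule bij_betw_cong[THEN iffD1, rotated]) auto
  have si: "\<sigma> i = j" by (simp add: \<sigma>_def)
  have "bij_betw \<sigma> (insert i (I - {i})) (insert (\<sigma> i) (J - {j}))"
    using notIn_Un_bij_betw3[of i "I - {i}" \<sigma> "J - {j}"] bs2 si by simp
  then have b: "bij_betw \<sigma> I J" using iI jJ si by (simp add: insert_absorb)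
  have Pe: "insert (i, j) P = {(k, \<sigma> k) | k. k \<in> I}"
    unfolding P \<sigma>_def using iI by auto
  have cs: "\<And>s. cst n a b s I = cdist n (a i) (b (s i)) + cst n a b s (I - {i})"
    unfolding cst_def using sum.remove[OF fin iI] by simp
  have cs2: "cst n a b \<sigma> (I - {i}) = cst n a b \<sigma>' (I - {i})"
    unfolding cst_def \<sigma>_def by (rule sum.cong) auto
  have "\<forall>\<tau>. bij_betw \<tau> I J \<longrightarrow> cst n a b \<sigma> I \<le> cst n a b \<tau> I"
  proof (intro allI impI)
    fix \<tau> assume bt: "bij_betw \<tau> I J"
    obtain \<tau>' where t: "bij_betw \<tau>' I J" "\<tau>' i = j" "cst n a b \<tau>' I \<le> cst n a b \<tau> I"
      using swap_ex[OF fin iI jJ bt H[OF bt]] by blast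
    have "bij_betw \<tau>' (I - {i}) (J - {j})"
      using bij_betw_DiffI[OF t(1), of "{i}" "{j}"] t(2) iI jJ by auto
    then have "cst n a b \<sigma>' (I - {i}) \<le> cst n a b \<tau>' (I - {i})" using opt by blast
    then show "cst n a b \<sigma> I \<le> cst n a b \<tau> I"
      using cs[of \<sigma>] cs[of \<tau>'] cs2 t(2,3) by (simp add: \<sigma>_def)
  qed
  then show ?thesis using b Pe by blast
qed

lemma gen:
  assumes "greedy_run n a b I J P"
  shows "finite I \<Longrightarrow> (\<forall>i\<in>I. a i < n) \<Longrightarrow> (\<forall>j\<in>J. b j < n) \<Longrightarrow>
    \<exists>\<sigma>. bij_betw \<sigma> I J \<and> P = {(k, \<sigma> k) | k. k \<in> I} \<and>
           (\<forall>\<tau>. bij_betw \<tau> I J \<longrightarrow> cst n a b \<sigma> I \<le> cst n a b \<tau> I)"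
  using assms
proof (induction rule: greedy_run.induct)
  case finished
  then show ?case by (intro exI[of _ id]) (auto simp: cst_def bij_betw_def)
next
  case (pick_source i I j J P)
  then obtain \<sigma>' where s: "bij_betw \<sigma>' (I - {i}) (J - {j})" "P = {(k, \<sigma>' k) | k. k \<in> I - {i}}"
    "\<forall>\<tau>. bij_betw \<tau> (I - {i}) (J - {j}) \<longrightarrow> cst n a b \<sigma>' (I - {i}) \<le> cst n a b \<tau> (I - {i})"
    by auto
  show ?case
  proof (rule step[OF pick_source.prems(1) pick_source.hyps(1,2) s(1) s(3) _ s(2)])
    fix \<tau> assume bt: "bij_betw \<tau> I J"
    show "\<forall>k\<in>I. cdist n (a i) (b j) + cdist n (a k) (b (\<tau> i)) \<le> cdist n (a i) (b (\<tau> i)) + cdist n (a k) (b j)"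
    proof
      fix k assume k: "k \<in> I"
      have tk: "\<tau> i \<in> J" using bt pick_source.hyps(1) by (auto simp: bij_betw_def)
      show "cdist n (a i) (b j) + cdist n (a k) (b (\<tau> i)) \<le> cdist n (a i) (b (\<tau> i)) + cdist n (a k) (b j)"
        by (rule exch) (use pick_source tk k in auto)
    qed
  qed
next
  case (pick_sink i I j J P)
  then obtain \<sigma>' where s: "bij_betw \<sigma>' (I - {i}) (J - {j})" "P = {(k, \<sigma>' k) | k. k \<in> I - {i}}"
    "\<forall>\<tau>. bij_betw \<tau> (I - {i}) (J - {j}) \<longrightarrow> cst n a b \<sigma>' (I - {i}) \<le> cst n a b \<tau> (I - {i})"
    by auto
  show ?case
  proof (rule step[OF pick_sink.prems(1) pick_sink.hyps(1,2) s(1) s(3) _ s(2)])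
    fix \<tau> assume bt: "bij_betw \<tau> I J"
    show "\<forall>k\<in>I. cdist n (a i) (b j) + cdist n (a k) (b (\<tau> i)) \<le> cdist n (a i) (b (\<tau> i)) + cdist n (a k) (b j)"
    proof
      fix k assume k: "k \<in> I"
      have tk: "\<tau> i \<in> J" using bt pick_sink.hyps(1) by (auto simp: bij_betw_def)
      show "cdist n (a i) (b j) + cdist n (a k) (b (\<tau> i)) \<le> cdist n (a i) (b (\<tau> i)) + cdist n (a k) (b j)"
        by (rule exch) (use pick_sink tk k in auto)
    qed
  qed
qed

theorem mainTheorem9:
  fixes n Q :: nat and a b :: "nat \<Rightarrow> nat" and P :: "(nat \<times> nat) set"
  assumes "n \<ge> 1"
    and "\<forall>i\<in>{1..Q}. a i < n" and "\<forall>j\<in>{1..Q}. b j < n"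
    and "greedy_run n a b {1..Q} {1..Q} P"
  shows "\<exists>\<sigma>. bij_betw \<sigma> {1..Q} {1..Q} \<and> P = {(i, \<sigma> i) | i. i \<in> {1..Q}} \<and>
           (\<forall>\<tau>. bij_betw \<tau> {1..Q} {1..Q} \<longrightarrow> pairing_cost n Q a b \<sigma> \<le> pairing_cost n Q a b \<tau>)"
  using gen[OF assms(4)] assms(2,3) by (simp add: cst_def pairing_cost_def)

end
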